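(* For every $d<\omega$, the graph $G_d=((2^2)^d,E_d)$, where $E_d=\{\{\sigma,\tau\}\subseteq(2^2)^d:\sigma\neq\tau \text{ and } \{\sigma,\tau\}\text{ is an up-}1\text{-comb}\}$, is a cograph.
   Context: $2^2=\{0,1\}^2$; $(2^2)^d$ is the set of sequences of length $d$ with entries in $2^2$, $(2^2)^{<d}$ those of length $<d$, $\tau^\frown a$ concatenation. For $A,B\subseteq(2^2)^d$, $A$ is narrowly below $B$ if there are $\tau\in(2^2)^{<d}$, $i<2$ with every element of $A$ extending $\tau^\frown(i,0)$ and every element of $B$ extending $\tau^\frown(i,1)$. The up-$1$-combs form the smallest class of finite subsets of $(2^2)^d$ containing singletons and containing $A\cup B$ whenever $A,B$ are in it, $|A|\le1$ and $A$ is narrowly below $B$. For graphs $G_0=(V_0,E_0)$, $G_1=(V_1,E_1)$ on disjoint vertex sets, the coproduct is $(V_0\cup V_1,E_0\cup E_1)$ and the graph join is $(V_0\cup V_1,E_0\cup E_1\cup\{\{a,b\}:a\in V_0,b\in V_1\})$. Cographs form the smallest class of graphs containing the one-vertex graph and closed (up to isomorphism) under coproducts and graph joins. *)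

theory Defs
  imports Main "HOL-Library.Sublist"
begin

text \<open>Elements of 2^2 are pairs of booleans (False = 0, True = 1);
  elements of (2^2)^d are lists of length d.\<close>

type_synonym seq = "(bool \<times> bool) list"

definition seqs :: "nat \<Rightarrow> seq set" where
  "seqs d = {s. length s = d}"

definition narrowly_below :: "nat \<Rightarrow> seq set \<Rightarrow> seq set \<Rightarrow> bool" where
  "narrowly_below d A B \<longleftrightarrow>
     (\<exists>\<tau> i. length \<tau> < d \<and>
        (\<forall>\<sigma>\<in>A. prefix (\<tau> @ [(i, False)]) \<sigma>) \<and>
        (\<forall>\<sigma>\<in>B. prefix (\<tau> @ [(i, True)]) \<sigma>))"

inductive_set up1comb :: "nat \<Rightarrow> seq set set" for d where
  single: "length \<sigma> = d \<Longrightarrow> {\<sigma>} \<in> up1comb d"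
| union: "A \<in> up1comb d \<Longrightarrow> B \<in> up1comb d \<Longrightarrow> card A \<le> 1 \<Longrightarrow>
          narrowly_below d A B \<Longrightarrow> A \<union> B \<in> up1comb d"

type_synonym 'a graph = "'a set \<times> 'a set set"

inductive cograph :: "'a graph \<Rightarrow> bool" where
  vertex: "cograph ({v}, {})"
| coproduct: "cograph (V0, E0) \<Longrightarrow> cograph (V1, E1) \<Longrightarrow> V0 \<inter> V1 = {} \<Longrightarrow>
              cograph (V0 \<union> V1, E0 \<union> E1)"
| join: "cograph (V0, E0) \<Longrightarrow> cograph (V1, E1) \<Longrightarrow> V0 \<inter> V1 = {} \<Longrightarrow>
         cograph (V0 \<union> V1, E0 \<union> E1 \<union> {{a, b} | a b. a \<in> V0 \<and> b \<in> V1})"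
| iso: "cograph (V, E) \<Longrightarrow> bij_betw f V V' \<Longrightarrow> E' = (\<lambda>e. f ` e) ` E \<Longrightarrow>
        cograph (V', E')"

definition comb_graph :: "nat \<Rightarrow> seq graph" where
  "comb_graph d = (seqs d,
     {{\<sigma>, \<tau>} | \<sigma> \<tau>. \<sigma> \<in> seqs d \<and> \<tau> \<in> seqs d \<and> \<sigma> \<noteq> \<tau> \<and> {\<sigma>, \<tau>} \<in> up1comb d})"

end

theory Submission
  imports Defs
begin

fun adj :: "seq \<Rightarrow> seq \<Rightarrow> bool" where
  "adj (c#s) (c'#t) = (if c = c' then adj s t else fst c = fst c' \<and> snd c \<noteq> snd c')"
| "adj _ _ = False"

lemma adj_sym: "adj s t \<Longrightarrow> adj t s"
  by (induction s t rule: adj.induct) (auto split: if_splits)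

lemma adj_neq: "adj s t \<Longrightarrow> s \<noteq> t"
  by (induction s t rule: adj.induct) (auto split: if_splits)

lemma adj_app: "adj (\<rho> @ (i,b)#s) (\<rho> @ (i,\<not>b)#t)"
  by (induction \<rho>) auto

lemma adj_dec: "adj \<sigma> \<tau> \<Longrightarrow> \<exists>\<rho> i b s t. \<sigma> = \<rho> @ (i,b)#s \<and> \<tau> = \<rho> @ (i,\<not>b)#t"
proof (induction \<sigma> \<tau> rule: adj.induct)
  case (1 c s c' t)
  show ?case
  proof (cases "c = c'")
    case True
    then obtain \<rho> i b s' t' where "s = \<rho> @ (i,b)#s'" "t = \<rho> @ (i,\<not>b)#t'"
      using 1 by auto
    then show ?thesis using True by (intro exI[of _ "c#\<rho>"]) auto
  next
    case False
    then show ?thesis using 1(2)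
      by (intro exI[of _ "[]"]) (cases c; cases c'; auto)
  qed
qed auto

lemma up1comb_props: "A \<in> up1comb d \<Longrightarrow> A \<noteq> {} \<and> (\<forall>\<sigma>\<in>A. length \<sigma> = d)"
  by (induction rule: up1comb.induct) auto

lemma nb_disj: "narrowly_below d A B \<Longrightarrow> A \<inter> B = {}"
proof (rule ccontr)
  assume a: "narrowly_below d A B" "A \<inter> B \<noteq> {}"
  obtain \<sigma> where s: "\<sigma> \<in> A" "\<sigma> \<in> B" using a(2) by blast
  obtain \<tau> i where "\<forall>x\<in>A. prefix (\<tau> @ [(i, False)]) x" "\<forall>x\<in>B. prefix (\<tau> @ [(i, True)]) x"
    using a(1) unfolding narrowly_below_def by blast
  then have "prefix (\<tau> @ [(i, False)]) \<sigma>" "prefix (\<tau> @ [(i, True)]) \<sigma>" using s by auto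
  then have "prefix (\<tau> @ [(i, False)]) (\<tau> @ [(i, True)]) \<or> prefix (\<tau> @ [(i, True)]) (\<tau> @ [(i, False)])"
    using prefix_same_cases by blast
  then show False by auto
qed

lemma cc: assumes u: "A \<union> B = {s,t}" and d: "A \<inter> B = {}" and ne: "A \<noteq> {}" "B \<noteq> {}" and st: "s \<noteq> t"
  shows "(A = {s} \<and> B = {t}) \<or> (A = {t} \<and> B = {s})"
proof -
  have m: "\<And>x. (x \<in> A \<or> x \<in> B) \<longleftrightarrow> (x = s \<or> x = t)" using u by blast
  have d': "\<And>x. x \<in> A \<Longrightarrow> x \<notin> B" using d by blast
  obtain a where a: "a \<in> A" using ne by blast
  obtain b where b: "b \<in> B" using ne by blast
  have "a \<noteq> b" using a b d' by blast
  have A: "A = {a}" using m d' a b \<open>a \<noteq> b\<close> st by (smt (verit) insertCI singleton_iff subsetI subset_antisym)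
  have B: "B = {b}" using m d' a b \<open>a \<noteq> b\<close> st by (smt (verit) insertCI singleton_iff subsetI subset_antisym)
  show ?thesis using A B u st by (auto simp: doubleton_eq_iff)
qed

lemma edge_iff:
  assumes "length \<sigma> = d" "length \<tau> = d"
  shows "(\<sigma> \<noteq> \<tau> \<and> {\<sigma>,\<tau>} \<in> up1comb d) \<longleftrightarrow> adj \<sigma> \<tau>"
proof
  assume H: "\<sigma> \<noteq> \<tau> \<and> {\<sigma>,\<tau>} \<in> up1comb d"
  then have "{\<sigma>,\<tau>} \<in> up1comb d" by blast
  then show "adj \<sigma> \<tau>"
  proof cases
    case (single x)
    have "\<sigma> = x" "\<tau> = x" using single(1) by (metis insertI1 insert_commute singletonD)+
    then show ?thesis using H by simp
  next
    case (union A B)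
    have d: "A \<inter> B = {}" using nb_disj union(5) .
    have ne: "A \<noteq> {}" "B \<noteq> {}" using up1comb_props union(2,3) by blast+
    have c: "(A = {\<sigma>} \<and> B = {\<tau>}) \<or> (A = {\<tau>} \<and> B = {\<sigma>})"
      using cc[OF union(1)[symmetric] d ne] H by blast
    obtain \<rho> i where P: "\<forall>x\<in>A. prefix (\<rho> @ [(i, False)]) x" "\<forall>x\<in>B. prefix (\<rho> @ [(i, True)]) x"
      using union(5) unfolding narrowly_below_def by blast
    have key: "adj a b" if pa: "prefix (\<rho> @ [(i, False)]) a" and pb: "prefix (\<rho> @ [(i, True)]) b" for a b
    proof -
      obtain s t where "a = (\<rho> @ [(i,False)]) @ s" "b = (\<rho> @ [(i,True)]) @ t"
        using pa pb unfolding prefix_def by blast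
      then show ?thesis using adj_app[of \<rho> i False s t] by simp
    qed
    from c show ?thesis
    proof
      assume "A = {\<sigma>} \<and> B = {\<tau>}"
      then show ?thesis using key[of \<sigma> \<tau>] P by simp
    next
      assume "A = {\<tau>} \<and> B = {\<sigma>}"
      then show ?thesis using key[of \<tau> \<sigma>] P adj_sym by simp
    qed
  qed
next
  assume A: "adj \<sigma> \<tau>"
  have ne: "\<sigma> \<noteq> \<tau>" using adj_neq A .
  obtain \<rho> i b s t where e: "\<sigma> = \<rho> @ (i,b)#s" "\<tau> = \<rho> @ (i,\<not>b)#t"
    using adj_dec A by blast
  have lr: "length \<rho> < d" using e assms by auto
  have s1: "{\<sigma>} \<in> up1comb d" "{\<tau>} \<in> up1comb d" using assms by (auto intro: up1comb.single)
  show "\<sigma> \<noteq> \<tau> \<and> {\<sigma>,\<tau>} \<in> up1comb d"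
  proof (cases b)
    case True
    have "narrowly_below d {\<tau>} {\<sigma>}" unfolding narrowly_below_def
      using e True lr by (intro exI[of _ \<rho>] exI[of _ i]) (auto simp: prefix_def)
    then have "{\<tau>} \<union> {\<sigma>} \<in> up1comb d" using up1comb.union[OF s1(2) s1(1)] by simp
    moreover have "{\<tau>} \<union> {\<sigma>} = {\<sigma>,\<tau>}" by blast
    ultimately have "{\<sigma>,\<tau>} \<in> up1comb d" by metis
    then show ?thesis using ne by simp
  next
    case False
    have "narrowly_below d {\<sigma>} {\<tau>}" unfolding narrowly_below_def
      using e False lr by (intro exI[of _ \<rho>] exI[of _ i]) (auto simp: prefix_def)
    then have "{\<sigma>} \<union> {\<tau>} \<in> up1comb d" using up1comb.union[OF s1(1) s1(2)] by simp
    moreover have "{\<sigma>} \<union> {\<tau>} = {\<sigma>,\<tau>}" by blast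
    ultimately have "{\<sigma>,\<tau>} \<in> up1comb d" by metis
    then show ?thesis using ne by simp
  qed
qed

definition E :: "nat \<Rightarrow> seq set set" where
  "E d = {{\<sigma>, \<tau>} | \<sigma> \<tau>. length \<sigma> = d \<and> length \<tau> = d \<and> adj \<sigma> \<tau>}"

lemma comb_graph_eq: "comb_graph d = (seqs d, E d)"
  unfolding comb_graph_def E_def seqs_def using edge_iff by blast


lemma E0: "E 0 = {}"
  unfolding E_def by auto

lemma seqs_Suc: "seqs (Suc d) = (\<Union>c. (#) c ` seqs d)"
  unfolding seqs_def by (auto simp: length_Suc_conv)

theorem lemma4p3:
  fixes d :: nat
  shows "cograph (comb_graph d)"
  unfolding comb_graph_eq
proof (induction d)
  case 0
  have "seqs 0 = {[]}" unfolding seqs_def by auto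
  then show ?case using E0 cograph.vertex by metis
next
  case (Suc d)
  define Vc where "Vc c = (#) c ` seqs d" for c :: "bool \<times> bool"
  define Ec where "Ec c = (\<lambda>e. (#) c ` e) ` E d" for c :: "bool \<times> bool"
  define J where "J i = {{a,b} | a b. a \<in> Vc (i,False) \<and> b \<in> Vc (i,True)}" for i
  have cg: "cograph (Vc c, Ec c)" for c
  proof (rule cograph.iso[OF Suc.IH])
    show "bij_betw ((#) c) (seqs d) (Vc c)" unfolding Vc_def
      by (rule inj_on_imp_bij_betw) (auto simp: inj_on_def)
    show "Ec c = (\<lambda>e. (#) c ` e) ` E d" by (simp add: Ec_def)
  qed
  have disj: "c \<noteq> c' \<Longrightarrow> Vc c \<inter> Vc c' = {}" for c c' unfolding Vc_def by auto
  have H: "cograph (Vc (i,False) \<union> Vc (i,True), Ec (i,False) \<union> Ec (i,True) \<union> J i)" for i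
    unfolding J_def by (rule cograph.join[OF cg cg disj]) auto
  have G: "cograph ((Vc (False,False) \<union> Vc (False,True)) \<union> (Vc (True,False) \<union> Vc (True,True)),
     (Ec (False,False) \<union> Ec (False,True) \<union> J False) \<union> (Ec (True,False) \<union> Ec (True,True) \<union> J True))"
    by (rule cograph.coproduct[OF H H]) (auto simp: Vc_def)
  have V: "(Vc (False,False) \<union> Vc (False,True)) \<union> (Vc (True,False) \<union> Vc (True,True)) = seqs (Suc d)"
  proof -
    have "(\<Union>c. (#) c ` seqs d) = (Vc (False,False) \<union> Vc (False,True)) \<union> (Vc (True,False) \<union> Vc (True,True))"
      unfolding Vc_def
    proof (intro equalityI subsetI)
      fix x assume "x \<in> (\<Union>c. (#) c ` seqs d)"
      then obtain c where "x \<in> (#) c ` seqs d" by blast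
      then show "x \<in> (#) (False,False) ` seqs d \<union> (#) (False,True) ` seqs d \<union> ((#) (True,False) ` seqs d \<union> (#) (True,True) ` seqs d)"
        by (cases c; cases "fst c"; cases "snd c") auto
    qed auto
    then show ?thesis using seqs_Suc by simp
  qed
  have Esub: "E (Suc d) \<subseteq> (Ec (False,False) \<union> Ec (False,True) \<union> J False) \<union> (Ec (True,False) \<union> Ec (True,True) \<union> J True)"
  proof
    fix e assume "e \<in> E (Suc d)"
    then obtain \<sigma> \<tau> where e: "e = {\<sigma>,\<tau>}" "length \<sigma> = Suc d" "length \<tau> = Suc d" "adj \<sigma> \<tau>"
      unfolding E_def by blast
    then obtain c s c' t where st: "\<sigma> = c#s" "\<tau> = c'#t" "length s = d" "length t = d"
      by (auto simp: length_Suc_conv)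
    obtain i b where c: "c = (i,b)" by (cases c)
    show "e \<in> (Ec (False,False) \<union> Ec (False,True) \<union> J False) \<union> (Ec (True,False) \<union> Ec (True,True) \<union> J True)"
    proof (cases "c = c'")
      case True
      then have "adj s t" using e st by simp
      then have "{s,t} \<in> E d" using st unfolding E_def by blast
      moreover have "e = (\<lambda>e. (#) c ` e) {s,t}" using e st True by simp
      ultimately have "e \<in> Ec c" unfolding Ec_def by blast
      then show ?thesis using c by (cases i; cases b) auto
    next
      case False
      then have c': "c' = (i, \<not>b)" using e st c by (cases c') auto
      have in1: "\<sigma> \<in> Vc (i,b)" "\<tau> \<in> Vc (i,\<not>b)" using st c c' unfolding Vc_def seqs_def by auto
      have "e \<in> J i"
      proof (cases b)
        case True
        then show ?thesis unfolding J_def using in1 e(1) by (auto simp: insert_commute)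
      next
        case False
        then show ?thesis unfolding J_def using in1 e(1) by auto
      qed
      then show ?thesis by (cases i) auto
    qed
  qed
  have Ecsub: "Ec c \<subseteq> E (Suc d)" for c
  proof
    fix e assume "e \<in> Ec c"
    then obtain s t where "e = {c#s, c#t}" "length s = d" "length t = d" "adj s t"
      unfolding Ec_def E_def by auto
    then show "e \<in> E (Suc d)" unfolding E_def
      by (intro CollectI exI[of _ "c#s"] exI[of _ "c#t"]) simp
  qed
  have Jsub: "J i \<subseteq> E (Suc d)" for i
  proof
    fix e assume "e \<in> J i"
    then obtain s t where "e = {(i,False)#s, (i,True)#t}" "length s = d" "length t = d"
      unfolding J_def Vc_def seqs_def by auto
    then show "e \<in> E (Suc d)" unfolding E_def by fastforce
  qed
  have "(Ec (False,False) \<union> Ec (False,True) \<union> J False) \<union> (Ec (True,False) \<union> Ec (True,True) \<union> J True) = E (Suc d)"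
    using Esub Ecsub Jsub by blast
  then show ?case using G V by simp
qed

end
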